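(* Let $F$ be a floorplan (a dissection of a rectangle into $n$ rectangular blocks $B=\{b_1,\dots,b_n\}$) and let $G_b=(V_b,E_b)$ be its block adjacency graph formulated for obtaining a monotonically increasing (resp. decreasing) staircase cut. Let $(L,R)$ be a cut of $G_b$, i.e. a partition $V_b=L\cup R$ with the source vertex in $L$ and the sink vertex in $R$. If at least one edge of $E_b$ is a back edge with respect to $(L,R)$, i.e. is directed from a vertex of $R$ to a vertex of $L$, then the boundary between the blocks of $L$ and the blocks of $R$ is not a monotone staircase, i.e. the cut is a non-monotone staircase cut.
   Context: Block adjacency graph (BAG) $G_b=(V_b,E_b)$: $V_b=\{v_i\}$ with $v_i$ corresponding to block $b_i$. For an increasing staircase (MIS): $(v_i,v_j)\in E_b$ iff blocks $b_i,b_j$ are adjacent (share a boundary segment) and $b_i$ is to the left of or above $b_j$; the source is the vertex of the top-left corner block and the sink that of the bottom-right corner block. For a decreasing staircase (MDS): $(v_i,v_j)\in E_b$ iff $b_i,b_j$ are adjacent and $b_i$ is to the left of or below $b_j$; the source is the bottom-left corner block and the sink the top-right corner block. A monotone increasing (resp. decreasing) staircase is a rectilinear path along block boundaries from one corner of the floorplan to the opposite corner that is monotone in both coordinates, separating the floorplan into a left part $L$ (containing the source block) and a right part $R$ (containing the sink block). *)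

theory Defs
  imports "HOL-Analysis.Analysis"
begin

text \<open>The y-axis points upwards ("above" = larger y).\<close>

definition block :: "(nat \<Rightarrow> real) \<Rightarrow> (nat \<Rightarrow> real) \<Rightarrow> (nat \<Rightarrow> real) \<Rightarrow> (nat \<Rightarrow> real)
    \<Rightarrow> nat \<Rightarrow> (real \<times> real) set" where
  "block xl xr yb yt i = {xl i..xr i} \<times> {yb i..yt i}"

definition floorplan :: "real \<Rightarrow> real \<Rightarrow> nat \<Rightarrow> (nat \<Rightarrow> real) \<Rightarrow> (nat \<Rightarrow> real)
    \<Rightarrow> (nat \<Rightarrow> real) \<Rightarrow> (nat \<Rightarrow> real) \<Rightarrow> bool" where
  "floorplan W H n xl xr yb yt \<longleftrightarrow>
     0 < W \<and> 0 < H \<and> 0 < n \<and>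
     (\<forall>i<n. xl i < xr i \<and> yb i < yt i) \<and>
     (\<forall>i<n. \<forall>j<n. i \<noteq> j \<longrightarrow>
        interior (block xl xr yb yt i) \<inter> interior (block xl xr yb yt j) = {}) \<and>
     (\<Union>i<n. block xl xr yb yt i) = {0..W} \<times> {0..H}"

definition adj_left :: "(nat \<Rightarrow> real) \<Rightarrow> (nat \<Rightarrow> real) \<Rightarrow> (nat \<Rightarrow> real) \<Rightarrow> (nat \<Rightarrow> real)
    \<Rightarrow> nat \<Rightarrow> nat \<Rightarrow> bool" where
  "adj_left xl xr yb yt i j \<longleftrightarrow> xr i = xl j \<and> max (yb i) (yb j) < min (yt i) (yt j)"

definition adj_above :: "(nat \<Rightarrow> real) \<Rightarrow> (nat \<Rightarrow> real) \<Rightarrow> (nat \<Rightarrow> real) \<Rightarrow> (nat \<Rightarrow> real)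
    \<Rightarrow> nat \<Rightarrow> nat \<Rightarrow> bool" where
  "adj_above xl xr yb yt i j \<longleftrightarrow> yb i = yt j \<and> max (xl i) (xl j) < min (xr i) (xr j)"

datatype stair_kind = Increasing | Decreasing

definition bag_edges :: "stair_kind \<Rightarrow> nat \<Rightarrow> (nat \<Rightarrow> real) \<Rightarrow> (nat \<Rightarrow> real)
    \<Rightarrow> (nat \<Rightarrow> real) \<Rightarrow> (nat \<Rightarrow> real) \<Rightarrow> (nat \<times> nat) set" where
  "bag_edges k n xl xr yb yt =
     {(i, j). i < n \<and> j < n \<and>
        (adj_left xl xr yb yt i j \<or>
         (case k of Increasing \<Rightarrow> adj_above xl xr yb yt i j
                  | Decreasing \<Rightarrow> adj_above xl xr yb yt j i))}"

definition source_corner :: "stair_kind \<Rightarrow> real \<Rightarrow> real \<Rightarrow> real \<times> real" where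
  "source_corner k W H = (case k of Increasing \<Rightarrow> (0, H) | Decreasing \<Rightarrow> (0, 0))"

definition sink_corner :: "stair_kind \<Rightarrow> real \<Rightarrow> real \<Rightarrow> real \<times> real" where
  "sink_corner k W H = (case k of Increasing \<Rightarrow> (W, 0) | Decreasing \<Rightarrow> (W, H))"

definition staircase_path :: "stair_kind \<Rightarrow> real \<Rightarrow> real \<Rightarrow> (real \<times> real) list \<Rightarrow> bool" where
  "staircase_path k W H ps \<longleftrightarrow>
     ps \<noteq> [] \<and>
     hd ps = (case k of Increasing \<Rightarrow> (0, 0) | Decreasing \<Rightarrow> (0, H)) \<and>
     last ps = (case k of Increasing \<Rightarrow> (W, H) | Decreasing \<Rightarrow> (W, 0)) \<and>
     (\<forall>m < length ps - 1.
        (fst (ps ! m) = fst (ps ! Suc m) \<or> snd (ps ! m) = snd (ps ! Suc m)) \<and>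
        fst (ps ! m) \<le> fst (ps ! Suc m) \<and>
        (case k of Increasing \<Rightarrow> snd (ps ! m) \<le> snd (ps ! Suc m)
                 | Decreasing \<Rightarrow> snd (ps ! Suc m) \<le> snd (ps ! m)))"

definition path_points :: "(real \<times> real) list \<Rightarrow> (real \<times> real) set" where
  "path_points ps = (\<Union>m < length ps - 1. closed_segment (ps ! m) (ps ! Suc m)) \<union> set ps"

definition left_side :: "stair_kind \<Rightarrow> (real \<times> real) list \<Rightarrow> (real \<times> real) set" where
  "left_side k ps = {z. \<exists>p \<in> path_points ps. fst z \<le> fst p \<and>
       (case k of Increasing \<Rightarrow> snd p \<le> snd z | Decreasing \<Rightarrow> snd z \<le> snd p)}"

definition right_side :: "stair_kind \<Rightarrow> (real \<times> real) list \<Rightarrow> (real \<times> real) set" where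
  "right_side k ps = {z. \<exists>p \<in> path_points ps. fst p \<le> fst z \<and>
       (case k of Increasing \<Rightarrow> snd z \<le> snd p | Decreasing \<Rightarrow> snd p \<le> snd z)}"

definition monotone_staircase_cut :: "stair_kind \<Rightarrow> real \<Rightarrow> real \<Rightarrow> nat \<Rightarrow> (nat \<Rightarrow> real)
    \<Rightarrow> (nat \<Rightarrow> real) \<Rightarrow> (nat \<Rightarrow> real) \<Rightarrow> (nat \<Rightarrow> real) \<Rightarrow> nat set \<Rightarrow> nat set \<Rightarrow> bool" where
  "monotone_staircase_cut k W H n xl xr yb yt L R \<longleftrightarrow>
     (\<exists>ps. staircase_path k W H ps \<and>
        path_points ps \<subseteq> (\<Union>i<n. frontier (block xl xr yb yt i)) \<and>
        (\<forall>i \<in> L. block xl xr yb yt i \<subseteq> left_side k ps) \<and>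
        (\<forall>i \<in> R. block xl xr yb yt i \<subseteq> right_side k ps))"

end

theory Submission
  imports Defs
begin

definition rel :: "stair_kind \<Rightarrow> real \<times> real \<Rightarrow> real \<times> real \<Rightarrow> bool" where
  "rel k a b \<longleftrightarrow> fst a \<le> fst b \<and> (if k = Increasing then snd a \<le> snd b else snd b \<le> snd a)"

lemma rel_trans: "rel k a b \<Longrightarrow> rel k b c \<Longrightarrow> rel k a c"
  unfolding rel_def by (auto split: if_splits)

lemma rel_refl: "rel k a a"
  unfolding rel_def by auto

lemma seg_param:
  fixes A B z :: "real \<times> real"
  assumes "z \<in> closed_segment A B"
  obtains u where "0 \<le> u" "u \<le> 1" "fst z = fst A + u * (fst B - fst A)"
    "snd z = snd A + u * (snd B - snd A)"
proof -
  from assms obtain u where u: "0 \<le> u" "u \<le> 1" "z = (1 - u) *\<^sub>R A + u *\<^sub>R B"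
    unfolding closed_segment_def by auto
  have "fst z = fst A + u * (fst B - fst A)" "snd z = snd A + u * (snd B - snd A)"
    by (auto simp: u(3) algebra_simps)
  then show ?thesis using that u(1,2) by blast
qed

lemma seg_comp:
  assumes r: "rel k A B" and z1: "z1 \<in> closed_segment A B" and z2: "z2 \<in> closed_segment A B"
  shows "rel k z1 z2 \<or> rel k z2 z1"
proof -
  obtain u1 where u1: "0 \<le> u1" "u1 \<le> 1" "fst z1 = fst A + u1 * (fst B - fst A)"
    "snd z1 = snd A + u1 * (snd B - snd A)" using seg_param[OF z1] by blast
  obtain u2 where u2: "0 \<le> u2" "u2 \<le> 1" "fst z2 = fst A + u2 * (fst B - fst A)"
    "snd z2 = snd A + u2 * (snd B - snd A)" using seg_param[OF z2] by blast
  have key: "rel k z1 z2" if "v1 \<le> v2" "fst z1 = fst A + v1 * (fst B - fst A)"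
    "snd z1 = snd A + v1 * (snd B - snd A)" "fst z2 = fst A + v2 * (fst B - fst A)"
    "snd z2 = snd A + v2 * (snd B - snd A)" for v1 v2 z1 z2
  proof -
    have "v1 * (fst B - fst A) \<le> v2 * (fst B - fst A)"
      using r that(1) unfolding rel_def by (intro mult_right_mono) auto
    moreover have "v1 * (snd B - snd A) \<le> v2 * (snd B - snd A)" if "k = Increasing"
      using r that \<open>v1 \<le> v2\<close> unfolding rel_def by (intro mult_right_mono) auto
    moreover have "v2 * (snd B - snd A) \<le> v1 * (snd B - snd A)" if "k \<noteq> Increasing"
      using r that \<open>v1 \<le> v2\<close> unfolding rel_def by (intro mult_right_mono_neg) auto
    ultimately show ?thesis using that unfolding rel_def by auto
  qed
  show ?thesis
  proof (cases "u1 \<le> u2")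
    case True then show ?thesis using key[OF True u1(3,4) u2(3,4)] by blast
  next
    case False then show ?thesis using key[of u2 u1 z2 z1] u1 u2 by auto
  qed
qed

lemma seg_bounds:
  assumes r: "rel k A B" and z: "z \<in> closed_segment A B"
  shows "rel k A z \<and> rel k z B"
proof -
  obtain u where u: "0 \<le> u" "u \<le> 1" "fst z = fst A + u * (fst B - fst A)"
    "snd z = snd A + u * (snd B - snd A)" using seg_param[OF z] by blast
  have f: "0 \<le> fst B - fst A" using r unfolding rel_def by auto
  have g1: "0 \<le> u * (fst B - fst A)" "0 \<le> (1 - u) * (fst B - fst A)" using u f by auto
  show ?thesis
  proof (cases "k = Increasing")
    case True
    then have "0 \<le> snd B - snd A" using r unfolding rel_def by auto
    then have "0 \<le> u * (snd B - snd A)" "0 \<le> (1 - u) * (snd B - snd A)" using u by auto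
    then show ?thesis using g1 u True unfolding rel_def by (auto simp: algebra_simps)
  next
    case False
    then have "0 \<le> snd A - snd B" using r unfolding rel_def by auto
    then have "0 \<le> u * (snd A - snd B)" "0 \<le> (1 - u) * (snd A - snd B)" using u by auto
    then show ?thesis using g1 u False unfolding rel_def by (auto simp: algebra_simps)
  qed
qed

lemma verts:
  assumes sp: "staircase_path k W H ps" and ij: "i \<le> j" "j < length ps"
  shows "rel k (ps ! i) (ps ! j)"
  using ij
proof (induction j)
  case 0 then show ?case by (simp add: rel_refl)
next
  case (Suc j)
  show ?case
  proof (cases "i = Suc j")
    case True then show ?thesis by (simp add: rel_refl)
  next
    case False
    then have "rel k (ps ! i) (ps ! j)" using Suc by auto
    moreover have "rel k (ps ! j) (ps ! Suc j)"
      using sp Suc.prems unfolding staircase_path_def rel_def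
      by (cases k) auto
    ultimately show ?thesis by (rule rel_trans)
  qed
qed

lemma locate:
  assumes "z \<in> path_points ps"
  shows "\<exists>i j. i \<le> j \<and> j \<le> Suc i \<and> j < length ps \<and> z \<in> closed_segment (ps ! i) (ps ! j)"
proof -
  from assms consider (a) m where "m < length ps - 1" "z \<in> closed_segment (ps ! m) (ps ! Suc m)"
    | (b) "z \<in> set ps" unfolding path_points_def by blast
  then show ?thesis
  proof cases
    case a then show ?thesis by (intro exI[of _ m] exI[of _ "Suc m"]) auto
  next
    case b then obtain i where "i < length ps" "z = ps ! i" by (auto simp: in_set_conv_nth)
    then show ?thesis by (intro exI[of _ i] exI[of _ i]) auto
  qed
qed

lemma chain:
  assumes sp: "staircase_path k W H ps" and z1: "z1 \<in> path_points ps" and z2: "z2 \<in> path_points ps"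
  shows "rel k z1 z2 \<or> rel k z2 z1"
proof -
  obtain i1 j1 where a: "i1 \<le> j1" "j1 \<le> Suc i1" "j1 < length ps" "z1 \<in> closed_segment (ps ! i1) (ps ! j1)"
    using locate[OF z1] by blast
  obtain i2 j2 where b: "i2 \<le> j2" "j2 \<le> Suc i2" "j2 < length ps" "z2 \<in> closed_segment (ps ! i2) (ps ! j2)"
    using locate[OF z2] by blast
  have r1: "rel k (ps ! i1) (ps ! j1)" using verts[OF sp a(1,3)] .
  have r2: "rel k (ps ! i2) (ps ! j2)" using verts[OF sp b(1,3)] .
  note s1 = seg_bounds[OF r1 a(4)] and s2 = seg_bounds[OF r2 b(4)]
  show ?thesis
  proof (cases "j1 \<le> i2")
    case True
    have "rel k (ps ! j1) (ps ! i2)" using verts[OF sp True] b by auto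
    then show ?thesis using s1 s2 rel_trans by blast
  next
    case F1: False
    show ?thesis
    proof (cases "j2 \<le> i1")
      case True
      have "rel k (ps ! j2) (ps ! i1)" using verts[OF sp True] a by auto
      then show ?thesis using s1 s2 rel_trans by blast
    next
      case False
      then have "i1 = i2" "j1 = j2" using F1 a b by auto
      then show ?thesis using seg_comp[OF r1 a(4)] b(4) by auto
    qed
  qed
qed

theorem corollary1:
  fixes k :: stair_kind and W H :: real and n :: nat
    and xl xr yb yt :: "nat \<Rightarrow> real" and L R :: "nat set" and s t :: nat
  assumes fp: "floorplan W H n xl xr yb yt"
    and src: "s < n" "source_corner k W H \<in> block xl xr yb yt s"
    and snk: "t < n" "sink_corner k W H \<in> block xl xr yb yt t"
    and cut: "L \<union> R = {..<n}" "L \<inter> R = {}"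
    and sL: "s \<in> L" and tR: "t \<in> R"
    and backedge: "\<exists>(u, v) \<in> bag_edges k n xl xr yb yt. u \<in> R \<and> v \<in> L"
  shows "\<not> monotone_staircase_cut k W H n xl xr yb yt L R"
proof
  assume "monotone_staircase_cut k W H n xl xr yb yt L R"
  then obtain ps where sp: "staircase_path k W H ps"
    and Ls: "\<forall>i \<in> L. block xl xr yb yt i \<subseteq> left_side k ps"
    and Rs: "\<forall>i \<in> R. block xl xr yb yt i \<subseteq> right_side k ps"
    unfolding monotone_staircase_cut_def by blast
  obtain u v where uv: "(u, v) \<in> bag_edges k n xl xr yb yt" "u \<in> R" "v \<in> L"
    using backedge by blast
  have un: "u < n" and vn: "v < n" using uv(1) unfolding bag_edges_def by auto
  have pos: "xl i < xr i" "yb i < yt i" if "i < n" for i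
    using fp that unfolding floorplan_def by auto
  note pu = pos[OF un] and pv = pos[OF vn]
  have inR: "\<exists>p \<in> path_points ps. fst p \<le> fst z \<and>
       (case k of Increasing \<Rightarrow> snd z \<le> snd p | Decreasing \<Rightarrow> snd p \<le> snd z)"
    if "z \<in> block xl xr yb yt u" for z
    using Rs uv(2) that unfolding right_side_def by blast
  have inL: "\<exists>p \<in> path_points ps. fst z \<le> fst p \<and>
       (case k of Increasing \<Rightarrow> snd p \<le> snd z | Decreasing \<Rightarrow> snd z \<le> snd p)"
    if "z \<in> block xl xr yb yt v" for z
    using Ls uv(3) that unfolding left_side_def by blast
  have bu: "(a, b) \<in> block xl xr yb yt u" if "xl u \<le> a" "a \<le> xr u" "yb u \<le> b" "b \<le> yt u" for a b
    using that unfolding block_def by auto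
  have bv: "(a, b) \<in> block xl xr yb yt v" if "xl v \<le> a" "a \<le> xr v" "yb v \<le> b" "b \<le> yt v" for a b
    using that unfolding block_def by auto
  show False
  proof (cases k)
    case Increasing
    consider (l) "adj_left xl xr yb yt u v" | (a) "adj_above xl xr yb yt u v"
      using uv(1) Increasing unfolding bag_edges_def by auto
    then show False
    proof cases
      case l
      then have h: "xr u = xl v" "max (yb u) (yb v) < min (yt u) (yt v)" unfolding adj_left_def by auto
      obtain p where p: "p \<in> path_points ps" "fst p \<le> xl u" "min (yt u) (yt v) \<le> snd p"
        using inR[OF bu[of "xl u" "min (yt u) (yt v)"]] pu h Increasing by auto
      obtain q where q: "q \<in> path_points ps" "xr v \<le> fst q" "snd q \<le> max (yb u) (yb v)"
        using inL[OF bv[of "xr v" "max (yb u) (yb v)"]] pv h Increasing by auto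
      show False using chain[OF sp p(1) q(1)] p q h pu pv Increasing unfolding rel_def by auto
    next
      case a
      then have h: "yb u = yt v" "max (xl u) (xl v) < min (xr u) (xr v)" unfolding adj_above_def by auto
      obtain p where p: "p \<in> path_points ps" "fst p \<le> max (xl u) (xl v)" "yt u \<le> snd p"
        using inR[OF bu[of "max (xl u) (xl v)" "yt u"]] pu h Increasing by auto
      obtain q where q: "q \<in> path_points ps" "min (xr u) (xr v) \<le> fst q" "snd q \<le> yb v"
        using inL[OF bv[of "min (xr u) (xr v)" "yb v"]] pv h Increasing by auto
      show False using chain[OF sp p(1) q(1)] p q h pu pv Increasing unfolding rel_def by auto
    qed
  next
    case Decreasing
    consider (l) "adj_left xl xr yb yt u v" | (a) "adj_above xl xr yb yt v u"
      using uv(1) Decreasing unfolding bag_edges_def by auto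
    then show False
    proof cases
      case l
      then have h: "xr u = xl v" "max (yb u) (yb v) < min (yt u) (yt v)" unfolding adj_left_def by auto
      obtain p where p: "p \<in> path_points ps" "fst p \<le> xl u" "snd p \<le> max (yb u) (yb v)"
        using inR[OF bu[of "xl u" "max (yb u) (yb v)"]] pu h Decreasing by auto
      obtain q where q: "q \<in> path_points ps" "xr v \<le> fst q" "min (yt u) (yt v) \<le> snd q"
        using inL[OF bv[of "xr v" "min (yt u) (yt v)"]] pv h Decreasing by auto
      show False using chain[OF sp p(1) q(1)] p q h pu pv Decreasing unfolding rel_def by auto
    next
      case a
      then have h: "yb v = yt u" "max (xl v) (xl u) < min (xr v) (xr u)" unfolding adj_above_def by auto
      obtain p where p: "p \<in> path_points ps" "fst p \<le> max (xl u) (xl v)" "snd p \<le> yb u"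
        using inR[OF bu[of "max (xl u) (xl v)" "yb u"]] pu h Decreasing by auto
      obtain q where q: "q \<in> path_points ps" "min (xr u) (xr v) \<le> fst q" "yt v \<le> snd q"
        using inL[OF bv[of "min (xr u) (xr v)" "yt v"]] pv h Decreasing by auto
      show False using chain[OF sp p(1) q(1)] p q h pu pv Decreasing unfolding rel_def by auto
    qed
  qed
qed

end
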